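(* Let $G$ be a topological group and let $H\in\mathrm{RUEB}(L^0(G))$. Then $[H]\in\mathrm{RUEB}(G)$, where $$[H]=\{f\circ h_n\circ c_{i,a} : f\in H,\ n\in\mathbb N\setminus\{0\},\ i\in\{1,\dots,n\},\ a\in G^{n-1}\}.$$
   Context: For a topological group $K$, equip $K$ with its right uniformity (basic entourages $\{(x,y): xy^{-1}\in U\}$, $U$ an identity neighbourhood); $\mathrm{RUC}_b(K)$ denotes the bounded real functions on $K$ uniformly continuous for it, and $\mathrm{RUEB}(K)$ the set of subsets of $\mathrm{RUC}_b(K)$ that are norm-bounded and uniformly equicontinuous (for every $\epsilon>0$ there is an identity neighbourhood $U$ with $|f(x)-f(y)|\le\epsilon$ for all $f$ in the set and all $x,y$ with $xy^{-1}\in U$). Let $\lambda$ be Lebesgue measure on $[0,1]$. $L^{0}(G)$ is the group of $\lambda$-a.e. equivalence classes of strongly $\lambda$-measurable maps $[0,1]\to G$ (maps $f$ such that for every $\epsilon>0$ there is a closed $A$ with $\lambda([0,1]\setminus A)\le\epsilon$ and $f|_A$ continuous), with pointwise operations and the topology of convergence in measure, whose identity neighbourhood basis consists of $N(U,\epsilon)=\{f:\lambda(\{x: f(x)\notin U\})<\epsilon\}$, $U$ an open identity neighbourhood in $G$, $\epsilon>0$. For $n\ge1$, $h_n\colon G^n\to L^0(G)$ sends $(g_1,\dots,g_n)$ to the map constantly $g_j$ on $[(j-1)/n,j/n)$, $j=1,\dots,n$. For $i\in\{1,\dots,n\}$ and $a\in G^{n-1}$, $c_{i,a}\colon G\to G^n$,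 $x\mapsto(a_1,\dots,a_{i-1},x,a_i,\dots,a_{n-1})$. *)

theory Defs
  imports "HOL-Analysis.Analysis"
begin

text \<open>Topological groups are modelled by the (not necessarily commutative) type class
  topological_group_add, written additively: x y^-1 becomes x - y = x + (- y).\<close>

definition right_close :: "'a::topological_group_add set \<Rightarrow> 'a \<Rightarrow> 'a \<Rightarrow> bool" where
  "right_close U x y \<longleftrightarrow> x - y \<in> U"

definition RUCb :: "('a::topological_group_add \<Rightarrow> real) set" where
  "RUCb = {f. bounded (range f) \<and>
     (\<forall>e>0. \<exists>U. open U \<and> 0 \<in> U \<and> (\<forall>x y. right_close U x y \<longrightarrow> \<bar>f x - f y\<bar> \<le> e))}"

definition RUEB :: "('a::topological_group_add \<Rightarrow> real) set set" where
  "RUEB = {S. S \<subseteq> RUCb \<and> (\<exists>B. \<forall>f\<in>S. \<forall>x. \<bar>f x\<bar> \<le> B) \<and>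
     (\<forall>e>0. \<exists>U. open U \<and> 0 \<in> U \<and>
        (\<forall>f\<in>S. \<forall>x y. right_close U x y \<longrightarrow> \<bar>f x - f y\<bar> \<le> e))}"

text \<open>Strongly measurable maps [0,1] -> G (Lusin property).  Elements of L^0(G) are
  represented by such maps; a.e.-equal representatives are identified automatically by
  any uniformly continuous function.\<close>
definition strongly_measurable :: "(real \<Rightarrow> 'a::topological_space) \<Rightarrow> bool" where
  "strongly_measurable f \<longleftrightarrow> (\<forall>e>0. \<exists>A. closed A \<and> A \<subseteq> {0..1} \<and>
      measure lebesgue ({0..1} - A) \<le> e \<and> continuous_on A f)"

definition L0 :: "(real \<Rightarrow> 'a::topological_group_add) set" where
  "L0 = {f. strongly_measurable f}"

definition Nbhd :: "'a::topological_group_add set \<Rightarrow> real \<Rightarrow> (real \<Rightarrow> 'a) set" where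
  "Nbhd U e = {f. measure lebesgue {x\<in>{0..1}. f x \<notin> U} < e}"

definition L0_close :: "'a::topological_group_add set \<Rightarrow> real \<Rightarrow> (real \<Rightarrow> 'a) \<Rightarrow> (real \<Rightarrow> 'a) \<Rightarrow> bool" where
  "L0_close U e f g \<longleftrightarrow> (\<lambda>x. f x - g x) \<in> Nbhd U e"

definition RUCb_L0 :: "((real \<Rightarrow> 'a::topological_group_add) \<Rightarrow> real) set" where
  "RUCb_L0 = {F. bounded (F ` L0) \<and>
     (\<forall>d>0. \<exists>U e. open U \<and> 0 \<in> U \<and> e > 0 \<and>
        (\<forall>f\<in>L0. \<forall>g\<in>L0. L0_close U e f g \<longrightarrow> \<bar>F f - F g\<bar> \<le> d))}"

definition RUEB_L0 :: "((real \<Rightarrow> 'a::topological_group_add) \<Rightarrow> real) set set" where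
  "RUEB_L0 = {S. S \<subseteq> RUCb_L0 \<and> (\<exists>B. \<forall>F\<in>S. \<forall>f\<in>L0. \<bar>F f\<bar> \<le> B) \<and>
     (\<forall>d>0. \<exists>U e. open U \<and> 0 \<in> U \<and> e > 0 \<and>
        (\<forall>F\<in>S. \<forall>f\<in>L0. \<forall>g\<in>L0. L0_close U e f g \<longrightarrow> \<bar>F f - F g\<bar> \<le> d))}"

text \<open>h_n: G^n -> L^0(G); an element of G^n is a list of length n, g ! (j-1) = g_j.
  The map is constantly g_j on [(j-1)/n, j/n); the value outside [0,1) is irrelevant.\<close>
definition hn :: "nat \<Rightarrow> 'a::topological_group_add list \<Rightarrow> real \<Rightarrow> 'a" where
  "hn n g t = (if 0 \<le> t \<and> t < 1 then g ! nat \<lfloor>t * real n\<rfloor> else 0)"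

text \<open>c_{i,a}: G -> G^n, inserting x at position i (1-based) into a in G^(n-1).\<close>
definition cia :: "nat \<Rightarrow> 'a list \<Rightarrow> 'a \<Rightarrow> 'a list" where
  "cia i a x = take (i - 1) a @ [x] @ drop (i - 1) a"

definition bracket :: "((real \<Rightarrow> 'a::topological_group_add) \<Rightarrow> real) set \<Rightarrow> ('a \<Rightarrow> real) set" where
  "bracket H = {F \<circ> hn n \<circ> cia i a | F n i a.
      F \<in> H \<and> n \<ge> 1 \<and> 1 \<le> i \<and> i \<le> n \<and> length a = n - 1}"

end

theory Submission
  imports Defs
begin

lemma step_break:
  fixes s t :: real and n :: nat
  assumes "0 \<le> s" "s < t" "t < 1" "\<lfloor>s * real n\<rfloor> \<noteq> \<lfloor>t * real n\<rfloor>"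
  shows "\<exists>k\<in>{1..n}. s < real k / real n \<and> real k / real n \<le> t"
proof -
  have np: "n > 0" using assms by (cases n) auto
  have le: "\<lfloor>s * real n\<rfloor> \<le> \<lfloor>t * real n\<rfloor>"
    using assms by (intro floor_mono mult_right_mono) auto
  hence lt: "\<lfloor>s * real n\<rfloor> < \<lfloor>t * real n\<rfloor>" using assms(4) by simp
  have s0: "0 \<le> \<lfloor>s * real n\<rfloor>" using assms by simp
  define k where "k = nat \<lfloor>t * real n\<rfloor>"
  have t0: "0 \<le> \<lfloor>t * real n\<rfloor>" using lt s0 by linarith
  have kk: "real k = of_int \<lfloor>t * real n\<rfloor>" using t0 k_def
    by (metis of_int_of_nat_eq of_nat_nat)
  have "s * real n < real k" using lt kk by (metis floor_less_iff of_int_of_nat_eq)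
  hence a: "s < real k / real n" using np by (simp add: field_simps)
  have "real k \<le> t * real n" using kk by simp
  hence b: "real k / real n \<le> t" using np by (simp add: field_simps)
  have "k \<ge> 1" using lt s0 k_def by linarith
  moreover have "real k < real n" using \<open>real k \<le> t * real n\<close> assms np
    by (smt (verit) mult_less_cancel_right2 of_nat_0_less_iff)
  ultimately show ?thesis using a b by auto
qed

lemma hn_L0:
  assumes n: "n \<ge> 1"
  shows "hn n g \<in> L0"
  unfolding L0_def strongly_measurable_def
proof (intro CollectI allI impI)
  fix e :: real assume e: "e > 0"
  define d where "d = e / (2 * real n)"
  have d: "d > 0" using e n by (simp add: d_def)
  define A where "A = {0..1} \<inter> (\<Inter>k\<in>{1..n}. {t::real. d \<le> \<bar>t - real k / real n\<bar>})"
  have spl: "\<And>k. {t::real. d \<le> \<bar>t - real k / real n\<bar>} = {..real k / real n - d} \<union> {real k / real n + d..}"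
    by auto
  have cA: "closed A" unfolding A_def spl
    by (intro closed_Int closed_INT ballI closed_Un closed_atMost closed_atLeast closed_atLeastAtMost)
  have sub: "{0..1} - A \<subseteq> (\<Union>k\<in>{1..n}. {real k / real n - d .. real k / real n + d})"
  proof
    fix t assume t: "t \<in> {0..1} - A"
    hence "\<not> (\<forall>k\<in>{1..n}. d \<le> \<bar>t - real k / real n\<bar>)"
      unfolding A_def by blast
    then obtain k where k: "k \<in> {1..n}" "\<bar>t - real k / real n\<bar> < d"
      by (meson not_le)
    thus "t \<in> (\<Union>k\<in>{1..n}. {real k / real n - d .. real k / real n + d})" by force
  qed
  have "measure lebesgue ({0..1} - A) \<le> measure lebesgue (\<Union>k\<in>{1..n}. {real k / real n - d .. real k / real n + d})"
    using cA sub by (intro measure_mono_fmeasurable lmeasurable_compact compact_UN) auto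
  also have "\<dots> \<le> (\<Sum>k\<in>{1..n}. measure lebesgue {real k / real n - d .. real k / real n + d})"
    by (intro measure_UNION_le) auto
  also have "\<dots> = real n * (2 * d)" using d by simp
  also have "\<dots> = e" using n by (simp add: d_def)
  finally have meas: "measure lebesgue ({0..1} - A) \<le> e" .
  have A1: "t \<in> A \<Longrightarrow> 0 \<le> t \<and> t < 1" for t
  proof -
    assume "t \<in> A"
    hence "t \<in> {0..1}" unfolding A_def by (rule IntD1)
    hence t01: "0 \<le> t" "t \<le> 1" by auto
    have nn: "n \<in> {1..n}" using n by simp
    have "t \<in> {t. d \<le> \<bar>t - real n / real n\<bar>}"
      using \<open>t \<in> A\<close> unfolding A_def by (rule INT_D[OF IntD2, OF _ nn])
    hence "d \<le> \<bar>t - real n / real n\<bar>" by simp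
    moreover have "real n / real n = 1" using n by simp
    ultimately have "d \<le> \<bar>t - 1\<bar>" by simp
    thus ?thesis using d t01 by linarith

  qed
  have loc: "s \<in> A \<Longrightarrow> t \<in> A \<Longrightarrow> \<bar>s - t\<bar> < d \<Longrightarrow> hn n g s = hn n g t" for s t
  proof -
    assume sA: "s \<in> A" and tA: "t \<in> A" and st: "\<bar>s - t\<bar> < d"
    have "\<lfloor>s * real n\<rfloor> = \<lfloor>t * real n\<rfloor>"
    proof (rule ccontr)
      assume ne: "\<lfloor>s * real n\<rfloor> \<noteq> \<lfloor>t * real n\<rfloor>"
      have "s \<noteq> t" using ne by auto
      then consider "s < t" | "t < s" by linarith
      thus False
      proof cases
        case 1
        then obtain k where k: "k \<in> {1..n}" "s < real k / real n" "real k / real n \<le> t"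
          using step_break[of s t n] A1 sA tA ne by auto
        have "d \<le> \<bar>t - real k / real n\<bar>" using tA k unfolding A_def by blast
        thus False using k st by linarith
      next
        case 2
        then obtain k where k: "k \<in> {1..n}" "t < real k / real n" "real k / real n \<le> s"
          using step_break[of t s n] A1 sA tA ne by auto
        have "d \<le> \<bar>s - real k / real n\<bar>" using sA k unfolding A_def by blast
        thus False using k st by linarith
      qed
    qed
    thus ?thesis using A1 sA tA unfolding hn_def by simp
  qed
  have "continuous_on A (hn n g)"
    unfolding continuous_on_eq_continuous_within
  proof
    fix t assume tA: "t \<in> A"
    show "continuous (at t within A) (hn n g)"
      unfolding continuous_within_topological
    proof (intro allI impI)
      fix B assume "open B" "hn n g t \<in> B"
      have "\<forall>y\<in>A. y \<in> ball t d \<longrightarrow> hn n g y \<in> B"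
      proof (intro ballI impI)
        fix y assume yA: "y \<in> A" and "y \<in> ball t d"
        hence "\<bar>y - t\<bar> < d" by (simp add: dist_real_def abs_minus_commute)
        hence "hn n g y = hn n g t" using loc[OF yA tA] by blast
        thus "hn n g y \<in> B" using \<open>hn n g t \<in> B\<close> by simp
      qed
      thus "\<exists>A'. open A' \<and> t \<in> A' \<and> (\<forall>y\<in>A. y \<in> A' \<longrightarrow> hn n g y \<in> B)"
        using d by (intro exI[of _ "ball t d"]) auto
    qed
  qed
  moreover have "A \<subseteq> {0..1}" unfolding A_def by blast
  ultimately show "\<exists>A. closed A \<and> A \<subseteq> {0..1} \<and> measure lebesgue ({0..1} - A) \<le> e \<and>
      continuous_on A (hn n g)" using cA meas by blast
qed

lemma cia_nth:
  "cia i a x ! k = cia i a y ! k \<or> (cia i a x ! k = x \<and> cia i a y ! k = y)"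
  unfolding cia_def by (auto simp: nth_append nth_Cons split: nat.splits)

lemma hn_close:
  fixes x y :: "'a::topological_group_add"
  assumes "0 \<in> U" "x - y \<in> U" "e > 0"
  shows "L0_close U e (hn n (cia i a x)) (hn n (cia i a y))"
proof -
  have "{t\<in>{0..1}. hn n (cia i a x) t - hn n (cia i a y) t \<notin> U} = {}"
  proof (safe)
    fix t :: real
    assume "hn n (cia i a x) t - hn n (cia i a y) t \<notin> U"
    moreover have "hn n (cia i a x) t - hn n (cia i a y) t \<in> U"
      using cia_nth[of i a x "nat \<lfloor>t * real n\<rfloor>" y] assms unfolding hn_def by auto
    ultimately show "t \<in> {}" by blast
  qed
  hence "measure lebesgue {t\<in>{0..1}. hn n (cia i a x) t - hn n (cia i a y) t \<notin> U} = 0"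
    by (simp only: measure_empty)
  thus ?thesis unfolding L0_close_def Nbhd_def using assms by simp
qed

theorem lemma4p3:
  fixes H :: "((real \<Rightarrow> 'a::topological_group_add) \<Rightarrow> real) set"
  assumes "H \<in> RUEB_L0"
  shows "bracket H \<in> RUEB"
proof -
  obtain B where B: "\<And>F f. F \<in> H \<Longrightarrow> f \<in> L0 \<Longrightarrow> \<bar>F f\<bar> \<le> B"
    using assms unfolding RUEB_L0_def by blast
  have eq: "\<And>d. d > 0 \<Longrightarrow> \<exists>U e. open U \<and> 0 \<in> U \<and> e > 0 \<and>
        (\<forall>F\<in>H. \<forall>f\<in>L0. \<forall>g\<in>L0. L0_close U e f g \<longrightarrow> \<bar>F f - F g\<bar> \<le> d)"
    using assms unfolding RUEB_L0_def by blast
  have bnd: "\<forall>\<phi>\<in>bracket H. \<forall>x. \<bar>\<phi> x\<bar> \<le> B"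
  proof (intro ballI allI)
    fix \<phi> x assume "\<phi> \<in> bracket H"
    then obtain F n i a where "\<phi> = F \<circ> hn n \<circ> cia i a" "F \<in> H" "n \<ge> 1"
      unfolding bracket_def by blast
    thus "\<bar>\<phi> x\<bar> \<le> B" using B[of F "hn n (cia i a x)"] hn_L0[of n "cia i a x"] by simp
  qed
  have equi: "\<forall>d>0. \<exists>U. open U \<and> 0 \<in> U \<and>
        (\<forall>\<phi>\<in>bracket H. \<forall>x y. right_close U x y \<longrightarrow> \<bar>\<phi> x - \<phi> y\<bar> \<le> d)"
  proof (intro allI impI)
    fix d :: real assume "d > 0"
    then obtain U e where U: "open U" "0 \<in> U" "e > 0"
      and H: "\<forall>F\<in>H. \<forall>f\<in>L0. \<forall>g\<in>L0. L0_close U e f g \<longrightarrow> \<bar>F f - F g\<bar> \<le> d"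
      using eq[OF \<open>d > 0\<close>] by blast
    have "\<forall>\<phi>\<in>bracket H. \<forall>x y. right_close U x y \<longrightarrow> \<bar>\<phi> x - \<phi> y\<bar> \<le> d"
    proof (intro ballI allI impI)
      fix \<phi> x y assume "\<phi> \<in> bracket H" and xy: "right_close U x y"
      then obtain F n i a where "\<phi> = F \<circ> hn n \<circ> cia i a" "F \<in> H" "n \<ge> 1"
        unfolding bracket_def by blast
      thus "\<bar>\<phi> x - \<phi> y\<bar> \<le> d"
        using H hn_L0[of n "cia i a x"] hn_L0[of n "cia i a y"] hn_close[OF U(2) _ U(3), of x y n i a] xy
        unfolding right_close_def by auto
    qed
    thus "\<exists>U. open U \<and> 0 \<in> U \<and>
        (\<forall>\<phi>\<in>bracket H. \<forall>x y. right_close U x y \<longrightarrow> \<bar>\<phi> x - \<phi> y\<bar> \<le> d)" using U by blast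
  qed
  have "bracket H \<subseteq> RUCb"
  proof
    fix \<phi> assume p: "\<phi> \<in> bracket H"
    have "bounded (range \<phi>)" unfolding bounded_real using bnd p by blast
    moreover have "\<forall>e>0. \<exists>U. open U \<and> 0 \<in> U \<and> (\<forall>x y. right_close U x y \<longrightarrow> \<bar>\<phi> x - \<phi> y\<bar> \<le> e)"
      using equi p by metis
    ultimately show "\<phi> \<in> RUCb" unfolding RUCb_def by blast
  qed
  thus ?thesis unfolding RUEB_def using bnd equi by blast
qed

end
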